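(* In the setting below with $P=\mathfrak S$, the worst case setting and the normalized error criterion: $\{S_d\}$ is strongly polynomially tractable if and only if $\lambda\in\ell_\tau$ for some $\tau>0$, $\lambda_1>\lambda_2$, and $d-\#I_d\in O(1)$. Moreover, $\{S_d\}$ is polynomially tractable if and only if $\lambda\in\ell_\tau$ for some $\tau>0$ and $d-\#I_d\in O(\ln d)$.
   Context: Setting: $S_1:H_1\to G_1$ is a compact linear operator between real Hilbert spaces ($H_1$ infinite-dimensional separable); $\lambda=(\lambda_m)_{m\in\mathbb N}$, $\lambda_1\ge\lambda_2\ge\dots\ge0$, are the eigenvalues of $S_1^\dagger S_1$. $S_d=S_1^{\otimes d}:H_1^{\otimes d}\to G_1^{\otimes d}$. For each $d$ fix $\emptyset\ne I_d=\{i_1<\dots<i_{a_d}\}\subset\{1,\dots,d\}$ ($I_1=\{1\}$), put $a_d=\#I_d$, $b_d=d-a_d$, and fix one type $P\in\{\mathfrak S,\mathfrak A\}$ for all $d$; the problem $\{S_d\}$ is the family of restrictions of $S_d$ to the $I_d$-symmetric subspace (if $P=\mathfrak S$) or $I_d$-antisymmetric subspace (if $P=\mathfrak A$) of $H_1^{\otimes d}$, i.e. the range of $\frac1{a_d!}\sum_{\pi}(\pm1)U_\pi$, the sum over permutations $\pi$ of $\{1,\dots,d\}$ fixing all points outside $I_d$, $U_\pi(f_1\otimes\cdots\otimes f_d)=f_{\pi(1)}\otimes\cdots\otimes f_{\pi(d)}$, sign $(-1)^{|\pi|}$ used for $\mathfrak A$. Let $\nabla_d=\{k\in\mathbb N^d:k_{i_1}\le\dots\le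 k_{i_{a_d}}\}$ for $P=\mathfrak S$ and with strict inequalities for $P=\mathfrak A$; $\lambda_{d,k}=\prod_{l=1}^d\lambda_{k_l}$; $\psi:\mathbb N\to\nabla_d$ a bijection with $\lambda_{d,\psi(1)}\ge\lambda_{d,\psi(2)}\ge\cdots$. These are exactly the eigenvalues of $S_d^\dagger S_d$ on the subspace, and the information complexity is $n(\epsilon,d)=\#\{k\in\nabla_d:\lambda_{d,k}>\epsilon^2\}$, the initial error $\epsilon^{\rm init}_d=\sqrt{\lambda_{d,\psi(1)}}$ (equal to $\lambda_1^{d/2}$ if $P=\mathfrak S$, and $\sqrt{\lambda_1^{b_d}\lambda_1\lambda_2\cdots\lambda_{a_d}}$ if $P=\mathfrak A$). Normalized error criterion: polynomially tractable means $\exists C,p>0,q\ge0$ with $n(\epsilon'\epsilon_d^{\rm init},d)\le C(\epsilon')^{-p}d^q$ for all $d\in\mathbb N,\epsilon'\in(0,1]$; strongly polynomially tractable: this with $q=0$. Standing assumptions: $\lambda_2>0$ and $\epsilon_d^{\rm init}>0$ for all $d$. $\ell_\tau$: sequences with $\sum_m\lambda_m^\tau<\infty$. *)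

theory Defs
  imports "HOL-Analysis.Analysis" "HOL-Library.Landau_Symbols"
begin

text \<open>Eigenvalues lam 1 \<ge> lam 2 \<ge> ... of S_1^* S_1 (index 0 unused).
  Multi-indices k in N^d are represented as functions nat \<Rightarrow> nat with
  k l \<ge> 1 for l in {1..d} and k l = 0 outside {1..d}.\<close>

definition nabla_sym :: "(nat \<Rightarrow> nat set) \<Rightarrow> nat \<Rightarrow> (nat \<Rightarrow> nat) set" where
  "nabla_sym I d = {k. (\<forall>l\<in>{1..d}. 1 \<le> k l) \<and> (\<forall>l. l \<notin> {1..d} \<longrightarrow> k l = 0)
      \<and> (\<forall>i\<in>I d. \<forall>j\<in>I d. i \<le> j \<longrightarrow> k i \<le> k j)}"

definition lam_dk :: "(nat \<Rightarrow> real) \<Rightarrow> nat \<Rightarrow> (nat \<Rightarrow> nat) \<Rightarrow> real" where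
  "lam_dk lam d k = (\<Prod>l\<in>{1..d}. lam (k l))"

definition info_compl :: "(nat \<Rightarrow> real) \<Rightarrow> (nat \<Rightarrow> nat set) \<Rightarrow> real \<Rightarrow> nat \<Rightarrow> nat" where
  "info_compl lam I eps d = card {k \<in> nabla_sym I d. lam_dk lam d k > eps\<^sup>2}"

definition eps_init :: "(nat \<Rightarrow> real) \<Rightarrow> (nat \<Rightarrow> nat set) \<Rightarrow> nat \<Rightarrow> real" where
  "eps_init lam I d = sqrt (Sup (lam_dk lam d ` nabla_sym I d))"

definition poly_tractable :: "(nat \<Rightarrow> real) \<Rightarrow> (nat \<Rightarrow> nat set) \<Rightarrow> bool" where
  "poly_tractable lam I \<longleftrightarrow> (\<exists>C p q. C > 0 \<and> p > 0 \<and> q \<ge> 0 \<and>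
     (\<forall>d\<ge>1. \<forall>e\<in>{0<..1::real}.
        real (info_compl lam I (e * eps_init lam I d) d) \<le> C * e powr (-p) * real d powr q))"

definition strongly_poly_tractable :: "(nat \<Rightarrow> real) \<Rightarrow> (nat \<Rightarrow> nat set) \<Rightarrow> bool" where
  "strongly_poly_tractable lam I \<longleftrightarrow> (\<exists>C p. C > 0 \<and> p > 0 \<and>
     (\<forall>d\<ge>1. \<forall>e\<in>{0<..1::real}.
        real (info_compl lam I (e * eps_init lam I d) d) \<le> C * e powr (-p)))"

end

theory Submission
  imports Defs
begin


lemma downset_eq:
  fixes J X Y :: "nat set"
  assumes "finite J" "X \<subseteq> J" "Y \<subseteq> J"
    "\<forall>x\<in>X. \<forall>y\<in>J. y \<le> x \<longrightarrow> y \<in> X" "\<forall>x\<in>Y. \<forall>y\<in>J. y \<le> x \<longrightarrow> y \<in> Y"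
    "card X = card Y"
  shows "X = Y"
proof -
  have "X \<subseteq> Y \<or> Y \<subseteq> X"
  proof (rule ccontr)
    assume "\<not> ?thesis"
    then obtain x y where xy: "x \<in> X" "x \<notin> Y" "y \<in> Y" "y \<notin> X" by blast
    have "x \<in> J" "y \<in> J" using xy assms(2,3) by auto
    show False
    proof (cases "x \<le> y")
      case True
      then have "x \<in> Y" using assms(5) xy(3) \<open>x \<in> J\<close> by blast
      then show False using xy by blast
    next
      case False
      then have "y \<le> x" by simp
      then have "y \<in> X" using assms(4) xy(1) \<open>y \<in> J\<close> by blast
      then show False using xy by blast
    qed
  qed
  moreover have "finite X" using assms(1,2) finite_subset by blast
  moreover have "finite Y" using assms(1,3) finite_subset by blast
  ultimately show ?thesis using assms(6) card_subset_eq[of Y X] card_subset_eq[of X Y] by auto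
qed

lemma prod_subset_le:
  fixes f :: "'a \<Rightarrow> real"
  assumes "finite T" "S \<subseteq> T" "\<And>x. x \<in> T \<Longrightarrow> 0 \<le> f x \<and> f x \<le> 1"
  shows "prod f T \<le> prod f S"
proof -
  have e: "prod f T = prod f (T - S) * prod f S"
    by (rule prod.subset_diff[OF assms(2,1)])
  have c: "prod f (T - S) \<le> 1" using assms by (intro prod_le_1) auto
  have b: "prod f S \<ge> 0" using assms by (intro prod_nonneg) auto
  have "prod f (T - S) * prod f S \<le> 1 * prod f S"
    by (rule mult_right_mono[OF c b])
  then show ?thesis using e by simp
qed

lemma H_bound:
  fixes mu :: "nat \<Rightarrow> real" and D :: "nat set"
  assumes D: "finite D"
    and mu01: "\<And>m. m \<ge> 1 \<Longrightarrow> 0 \<le> mu m \<and> mu m \<le> 1"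
    and lim: "mu \<longlonglongrightarrow> 0"
    and tau: "\<tau> > 0" and summ: "summable (\<lambda>m. mu (Suc m) powr \<tau>)"
    and eps: "eps > 0"
  defines "H \<equiv> {h. (\<forall>l. l \<notin> D \<longrightarrow> h l = 0) \<and> (\<forall>l\<in>D. 1 \<le> h l) \<and> (\<Prod>l\<in>D. mu (h l)) > eps}"
  shows "finite H \<and> real (card H) \<le> eps powr (-\<tau>) * (\<Sum>m. mu (Suc m) powr \<tau>) ^ card D"
proof -
  have "eventually (\<lambda>m. mu m < eps) sequentially"
    using order_tendstoD(2)[OF lim eps] .
  then obtain K where K: "\<And>m. m \<ge> K \<Longrightarrow> mu m < eps" by (auto simp: eventually_sequentially)
  define P where "P = PiE D (\<lambda>_. {Suc 0..<Suc K})"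
  have finP: "finite P" unfolding P_def using D by (intro finite_PiE) auto
  have hK: "h l < K" if "h \<in> H" "l \<in> D" for h l
  proof (rule ccontr)
    assume "\<not> h l < K"
    then have "mu (h l) < eps" using K by auto
    moreover have "(\<Prod>i\<in>D. mu (h i)) \<le> (\<Prod>i\<in>{l}. mu (h i))"
    proof (rule prod_subset_le[where f="\<lambda>i. mu (h i)"])
      show "finite D" by (rule D)
      show "{l} \<subseteq> D" using that by auto
      fix x assume "x \<in> D"
      then have "1 \<le> h x" using that(1) unfolding H_def by auto
      then show "0 \<le> mu (h x) \<and> mu (h x) \<le> 1" using mu01 by auto
    qed
    ultimately show False using that unfolding H_def by auto
  qed
  have sub: "(\<lambda>h. restrict h D) ` H \<subseteq> P"
  proof
    fix g assume "g \<in> (\<lambda>h. restrict h D) ` H"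
    then obtain h where h: "h \<in> H" "g = restrict h D" by blast
    have "\<forall>l\<in>D. h l \<in> {Suc 0..<Suc K}"
    proof
      fix l assume l: "l \<in> D"
      have "1 \<le> h l" using h(1) l unfolding H_def by blast
      moreover have "h l < K" using hK[OF h(1) l] .
      ultimately show "h l \<in> {Suc 0..<Suc K}" by simp
    qed
    then show "g \<in> P" unfolding P_def h(2) by (simp add: restrict_PiE_iff)
  qed
  have inj: "inj_on (\<lambda>h. restrict h D) H"
  proof (rule inj_onI)
    fix h h' assume hh: "h \<in> H" "h' \<in> H" "restrict h D = restrict h' D"
    show "h = h'"
    proof
      fix l
      show "h l = h' l"
      proof (cases "l \<in> D")
        case True
        then show ?thesis using fun_cong[OF hh(3), of l] by simp
      next
        case False
        then show ?thesis using hh(1,2) unfolding H_def by simp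
      qed
    qed
  qed
  have finR: "finite ((\<lambda>h. restrict h D) ` H)" using sub finP finite_subset by blast
  have finH: "finite H" using finR inj finite_imageD by blast
  define w where "w g = (\<Prod>l\<in>D. mu (g l) powr \<tau>) / eps powr \<tau>" for g :: "nat \<Rightarrow> nat"
  have w1: "1 \<le> w g" if "g \<in> (\<lambda>h. restrict h D) ` H" for g
  proof -
    from that obtain h where h: "h \<in> H" "g = restrict h D" by blast
    have "(\<Prod>l\<in>D. mu (g l)) = (\<Prod>l\<in>D. mu (h l))" using h(2) by (intro prod.cong) auto
    moreover have "(\<Prod>l\<in>D. mu (h l)) > eps" using h(1) unfolding H_def by blast
    ultimately have gt: "(\<Prod>l\<in>D. mu (g l)) > eps" by simp
    have "eps powr \<tau> < (\<Prod>l\<in>D. mu (g l)) powr \<tau>"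
      using gt eps tau by (intro powr_less_mono2) auto
    also have "\<dots> = (\<Prod>l\<in>D. mu (g l) powr \<tau>)" by (rule prod_powr_distrib)
    finally have "eps powr \<tau> < (\<Prod>l\<in>D. mu (g l) powr \<tau>)" .
    moreover have "eps powr \<tau> > 0" using eps by simp
    ultimately show ?thesis unfolding w_def by simp
  qed
  have w0: "0 \<le> w g" for g unfolding w_def by (intro divide_nonneg_nonneg prod_nonneg) auto
  define T where "T = (\<Sum>m. mu (Suc m) powr \<tau>)"
  have "real (card H) = real (card ((\<lambda>h. restrict h D) ` H))" using card_image[OF inj] by simp
  also have "\<dots> = (\<Sum>g\<in>(\<lambda>h. restrict h D) ` H. 1)" by simp
  also have "\<dots> \<le> (\<Sum>g\<in>(\<lambda>h. restrict h D) ` H. w g)" using w1 by (intro sum_mono) auto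
  also have "\<dots> \<le> (\<Sum>g\<in>P. w g)" using sub finP w0 by (intro sum_mono2) auto
  also have "\<dots> = (\<Sum>g\<in>P. (\<Prod>l\<in>D. mu (g l) powr \<tau>)) / eps powr \<tau>"
    unfolding w_def by (simp add: sum_divide_distrib)
  also have "(\<Sum>g\<in>P. (\<Prod>l\<in>D. mu (g l) powr \<tau>)) = (\<Prod>l\<in>D. \<Sum>m\<in>{Suc 0..<Suc K}. mu m powr \<tau>)"
    unfolding P_def using D by (subst prod_sum_PiE) auto
  also have "\<dots> = (\<Sum>m\<in>{Suc 0..<Suc K}. mu m powr \<tau>) ^ card D" by simp
  also have "(\<Sum>m\<in>{Suc 0..<Suc K}. mu m powr \<tau>) ^ card D \<le> T ^ card D"
  proof (rule power_mono)
    have "(\<Sum>m\<in>{Suc 0..<Suc K}. mu m powr \<tau>) = (\<Sum>m\<in>{0..<K}. mu (Suc m) powr \<tau>)"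
      by (rule sum.shift_bounds_Suc_ivl)
    also have "\<dots> \<le> T" unfolding T_def
      using summ by (intro sum_le_suminf) auto
    finally show "(\<Sum>m\<in>{Suc 0..<Suc K}. mu m powr \<tau>) \<le> T" .
    show "0 \<le> (\<Sum>m\<in>{Suc 0..<Suc K}. mu m powr \<tau>)" by (intro sum_nonneg) auto
  qed
  then have "(\<Sum>m\<in>{Suc 0..<Suc K}. mu m powr \<tau>) ^ card D / eps powr \<tau> \<le> T ^ card D / eps powr \<tau>"
    using eps by (intro divide_right_mono) auto
  also have "T ^ card D / eps powr \<tau> = eps powr (-\<tau>) * T ^ card D"
    by (simp add: powr_minus_divide)
  finally show ?thesis using finH unfolding T_def by simp
qed

lemma upper_count:
  fixes mu :: "nat \<Rightarrow> real" and J :: "nat set"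
  assumes J: "J \<subseteq> {1..d}"
    and mu01: "\<And>m. m \<ge> 1 \<Longrightarrow> 0 \<le> mu m \<and> mu m \<le> 1"
    and lim: "mu \<longlonglongrightarrow> 0"
    and tau: "\<tau> > 0" and summ: "summable (\<lambda>m. mu (Suc m) powr \<tau>)"
    and M: "1 \<le> M" and rho: "\<And>m. M < m \<Longrightarrow> mu m \<le> \<rho>"
    and eps: "eps > 0"
  shows "real (card {k \<in> nabla_sym (\<lambda>_. J) d. (\<Prod>l\<in>{1..d}. mu (k l)) > eps})
     \<le> real ((card J + 1) ^ (M - 1)) *
        (\<Sum>j\<in>{j\<in>{..card J}. \<rho> ^ j > eps}. eps powr (-\<tau>) * (\<Sum>m. mu (Suc m) powr \<tau>) ^ (d - card J + j))"
proof -
  define a where "a = card J"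
  define A where "A = {k \<in> nabla_sym (\<lambda>_. J) d. (\<Prod>l\<in>{1..d}. mu (k l)) > eps}"
  define L where "L k m = {l\<in>J. k l < m}" for k :: "nat \<Rightarrow> nat" and m
  define g where "g k = (\<lambda>l. if l \<in> J \<and> k l \<le> M then 0 else k l)" for k :: "nat \<Rightarrow> nat"
  define \<Phi> where "\<Phi> k = (restrict (\<lambda>m. card (L k m)) {2..M}, g k)" for k
  define S where "S = (\<Sum>m. mu (Suc m) powr \<tau>)"
  define Js where "Js = {j\<in>{..card J}. \<rho> ^ j > eps}"
  define jf where "jf k = card (J - L k (Suc M))" for k
  have S0: "S \<ge> 0" unfolding S_def using summ by (intro suminf_nonneg) auto
  have finJ: "finite J" using J finite_subset by blast
  have Ak: "(\<forall>l\<in>{1..d}. 1 \<le> k l) \<and> (\<forall>l. l \<notin> {1..d} \<longrightarrow> k l = 0) \<and> (\<forall>i\<in>J. \<forall>j\<in>J. i \<le> j \<longrightarrow> k i \<le> k j)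
     \<and> (\<Prod>l\<in>{1..d}. mu (k l)) > eps" if "k \<in> A" for k
    using that unfolding A_def nabla_sym_def by auto
  have Leq: "L k m = L k' m" if "k \<in> A" "k' \<in> A" "card (L k m) = card (L k' m)" for k k' m
  proof (rule downset_eq[OF finJ])
    show "L k m \<subseteq> J" "L k' m \<subseteq> J" unfolding L_def by auto
    have mono: "\<And>i j. i \<in> J \<Longrightarrow> j \<in> J \<Longrightarrow> i \<le> j \<Longrightarrow> k i \<le> k j"
      "\<And>i j. i \<in> J \<Longrightarrow> j \<in> J \<Longrightarrow> i \<le> j \<Longrightarrow> k' i \<le> k' j"
      using Ak[OF that(1)] Ak[OF that(2)] by blast+
    show "\<forall>x\<in>L k m. \<forall>y\<in>J. y \<le> x \<longrightarrow> y \<in> L k m"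
    proof (intro ballI impI)
      fix x y assume "x \<in> L k m" "y \<in> J" "y \<le> x"
      then show "y \<in> L k m" using mono(1)[of y x] unfolding L_def by auto
    qed
    show "\<forall>x\<in>L k' m. \<forall>y\<in>J. y \<le> x \<longrightarrow> y \<in> L k' m"
    proof (intro ballI impI)
      fix x y assume "x \<in> L k' m" "y \<in> J" "y \<le> x"
      then show "y \<in> L k' m" using mono(2)[of y x] unfolding L_def by auto
    qed
  qed (rule that(3))
  have kpos: "1 \<le> k l" if "k \<in> A" "l \<in> J" for k l using Ak[OF that(1)] that(2) J by auto
  have key: False if "k \<in> A" "k' \<in> A" "\<Phi> k = \<Phi> k'" "l \<in> J" "k' l \<le> M" "k l < k' l" for k k' l
  proof -
    have m: "k' l \<in> {2..M}" using that kpos[OF that(1,4)] by auto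
    have "card (L k (k' l)) = card (L k' (k' l))"
      using that(3) m unfolding \<Phi>_def by (metis (no_types, lifting) prod.inject restrict_apply')
    then have "L k (k' l) = L k' (k' l)" using Leq that by blast
    moreover have "l \<in> L k (k' l)" "l \<notin> L k' (k' l)" unfolding L_def using that by auto
    ultimately show False by blast
  qed
  have inj: "inj_on \<Phi> A"
  proof (rule inj_onI)
    fix k k' assume kk: "k \<in> A" "k' \<in> A" "\<Phi> k = \<Phi> k'"
    then have gg: "g k = g k'" unfolding \<Phi>_def by simp
    show "k = k'"
    proof
      fix l
      show "k l = k' l"
      proof (cases "l \<in> J")
        case False
        then show ?thesis using fun_cong[OF gg, of l] unfolding g_def by simp
      next
        case True
        have iff: "k l \<le> M \<longleftrightarrow> k' l \<le> M"
          using fun_cong[OF gg, of l] True kpos[OF kk(1) True] kpos[OF kk(2) True]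
          unfolding g_def by (auto split: if_splits)
        show ?thesis
        proof (cases "k l \<le> M")
          case False
          then show ?thesis using iff fun_cong[OF gg, of l] unfolding g_def by auto
        next
          case le: True
          show ?thesis
          proof (rule ccontr)
            assume ne: "k l \<noteq> k' l"
            show False
            proof (cases "k l < k' l")
              case True
              then show False using key[of k k' l] kk iff le \<open>l \<in> J\<close> by auto
            next
              case False
              then have "k' l < k l" using ne by auto
              then show False using key[of k' k l] kk le \<open>l \<in> J\<close> by auto
            qed
          qed
        qed
      qed
    qed
  qed
  define Pc where "Pc = PiE {2..M} (\<lambda>_. {0..a})"
  have finPc: "finite Pc" unfolding Pc_def by (intro finite_PiE) auto
  have cardPc: "card Pc = (a + 1) ^ (M - 1)" unfolding Pc_def by (simp add: card_PiE)
  have Lsub: "L k m \<subseteq> J" for k m unfolding L_def by auto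
  have PcIn: "restrict (\<lambda>m. card (L k m)) {2..M} \<in> Pc" for k
    unfolding Pc_def a_def using card_mono[OF finJ Lsub] by auto
  have jfJs: "jf k \<in> Js" if "k \<in> A" for k
  proof -
    have "jf k \<le> card J" unfolding jf_def using finJ by (intro card_mono) auto
    moreover have "eps < \<rho> ^ jf k"
    proof -
      have "eps < (\<Prod>l\<in>{1..d}. mu (k l))" using Ak[OF that] by auto
      also have "\<dots> \<le> (\<Prod>l\<in>J - L k (Suc M). mu (k l))"
        using J Ak[OF that] mu01 by (intro prod_subset_le) auto
      also have "\<dots> \<le> (\<Prod>l\<in>J - L k (Suc M). \<rho>)"
      proof (rule prod_mono)
        fix l assume l: "l \<in> J - L k (Suc M)"
        then have "M < k l" "1 \<le> k l" using kpos[OF that] unfolding L_def by auto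
        then show "0 \<le> mu (k l) \<and> mu (k l) \<le> \<rho>" using mu01 rho by auto
      qed
      also have "\<dots> = \<rho> ^ jf k" unfolding jf_def by simp
      finally show ?thesis .
    qed
    ultimately show ?thesis unfolding Js_def by auto
  qed
  define H where "H D = {h. (\<forall>l. l \<notin> D \<longrightarrow> h l = 0) \<and> (\<forall>l\<in>D. 1 \<le> h l) \<and> (\<Prod>l\<in>D. mu (h l)) > eps}"
    for D :: "nat set"
  have Gj: "finite (g ` {k\<in>A. jf k = j}) \<and> real (card (g ` {k\<in>A. jf k = j})) \<le> eps powr (-\<tau>) * S ^ (d - card J + j)"
    for j
  proof (cases "{k\<in>A. jf k = j} = {}")
    case True
    then have e: "g ` {k\<in>A. jf k = j} = {}" by blast
    show ?thesis unfolding e using S0 by simp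
  next
    case False
    then obtain k0 where k0: "k0 \<in> A" "jf k0 = j" by auto
    define D where "D = ({1..d} - J) \<union> (J - L k0 (Suc M))"
    have finD: "finite D" unfolding D_def using finJ by auto
    have cardL: "card (L k (Suc M)) = card J - jf k" for k
    proof -
      have "card (J - L k (Suc M)) = card J - card (L k (Suc M))"
        using finJ Lsub by (intro card_Diff_subset) (auto intro: finite_subset)
      moreover have "card (L k (Suc M)) \<le> card J" using card_mono[OF finJ Lsub] .
      ultimately show ?thesis unfolding jf_def by simp
    qed
    have samej: "J - L k (Suc M) = J - L k0 (Suc M)" if "k \<in> A" "jf k = j" for k
      using Leq[OF that(1) k0(1)] cardL that k0 by metis
    have cardD: "card D = d - card J + j"
    proof -
      have "card ({1..d} - J) = d - card J" using J finJ by (simp add: card_Diff_subset)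
      moreover have "card (J - L k0 (Suc M)) = j" using k0 unfolding jf_def by simp
      moreover have "({1..d} - J) \<inter> (J - L k0 (Suc M)) = {}" by auto
      ultimately show ?thesis unfolding D_def using finJ by (subst card_Un_disjoint) auto
    qed
    have DS: "D \<subseteq> {1..d}" unfolding D_def using J by auto
    have sub: "g ` {k\<in>A. jf k = j} \<subseteq> H D"
    proof
      fix h assume "h \<in> g ` {k\<in>A. jf k = j}"
      then obtain k where k: "k \<in> A" "jf k = j" "h = g k" by auto
      have sj: "J - L k (Suc M) = J - L k0 (Suc M)" using samej k by auto
      have out: "h l = 0" if "l \<notin> D" for l
      proof (cases "l \<in> {1..d}")
        case False then show ?thesis using Ak[OF k(1)] k(3) unfolding g_def by auto
      next
        case True
        then have "l \<in> J" "l \<in> L k (Suc M)" using that sj unfolding D_def by auto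
        then show ?thesis using k(3) unfolding g_def L_def by auto
      qed
      have inD: "h l = k l" if "l \<in> D" for l
      proof -
        have "l \<in> ({1..d} - J) \<union> (J - L k (Suc M))" using that sj unfolding D_def by simp
        then show ?thesis using k(3) unfolding g_def L_def by auto
      qed
      have "eps < (\<Prod>l\<in>{1..d}. mu (k l))" using Ak[OF k(1)] by auto
      also have "\<dots> \<le> (\<Prod>l\<in>D. mu (k l))"
        using DS Ak[OF k(1)] mu01 by (intro prod_subset_le) auto
      also have "\<dots> = (\<Prod>l\<in>D. mu (h l))" using inD by simp
      finally show "h \<in> H D" unfolding H_def using out inD DS Ak[OF k(1)] by auto
    qed
    have HB: "finite (H D) \<and> real (card (H D)) \<le> eps powr (-\<tau>) * S ^ card D"
      unfolding H_def S_def using H_bound[OF finD mu01 lim tau summ eps] by blast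
    then have "finite (g ` {k\<in>A. jf k = j})" using sub finite_subset by blast
    moreover have "card (g ` {k\<in>A. jf k = j}) \<le> card (H D)" using sub HB by (intro card_mono) auto
    ultimately show ?thesis using HB cardD by auto
  qed
  have finJs: "finite Js" unfolding Js_def by auto
  have Gsub: "g ` A \<subseteq> (\<Union>j\<in>Js. g ` {k\<in>A. jf k = j})" using jfJs by blast
  have finU: "finite (\<Union>j\<in>Js. g ` {k\<in>A. jf k = j})" using Gj finJs by blast
  have "real (card (g ` A)) \<le> real (card (\<Union>j\<in>Js. g ` {k\<in>A. jf k = j}))"
    using card_mono[OF finU Gsub] by simp
  also have "\<dots> \<le> real (\<Sum>j\<in>Js. card (g ` {k\<in>A. jf k = j}))"
    using card_UN_le[OF finJs] by (simp only: of_nat_le_iff)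
  also have "\<dots> \<le> (\<Sum>j\<in>Js. eps powr (-\<tau>) * S ^ (d - card J + j))"
    unfolding of_nat_sum using Gj by (intro sum_mono) auto
  finally have cG: "real (card (g ` A)) \<le> (\<Sum>j\<in>Js. eps powr (-\<tau>) * S ^ (d - card J + j))" .
  have finG: "finite (g ` A)" using Gsub finU finite_subset by blast
  have "card A \<le> card (Pc \<times> g ` A)"
    using inj PcIn finPc finG by (intro card_inj_on_le[of \<Phi>]) (auto simp: \<Phi>_def)
  then have "real (card A) \<le> real (card Pc) * real (card (g ` A))"
    by (simp add: card_cartesian_product) (metis of_nat_le_iff of_nat_mult)
  also have "\<dots> \<le> real ((card J + 1) ^ (M - 1)) * (\<Sum>j\<in>Js. eps powr (-\<tau>) * S ^ (d - card J + j))"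
    unfolding cardPc a_def by (rule mult_left_mono[OF cG]) simp
  finally have fin: "real (card A) \<le> real ((card J + 1) ^ (M - 1)) * (\<Sum>j\<in>Js. eps powr (-\<tau>) * S ^ (d - card J + j))" .
  show ?thesis using fin unfolding A_def S_def Js_def by simp
qed



lemma sum_j_bound:
  fixes \<rho> S eps \<tau> :: real
  assumes rho: "0 < \<rho>" "\<rho> < 1" and S: "S \<ge> 1" and eps: "0 < eps" "eps \<le> 1" and tau: "\<tau> > 0"
  shows "(\<Sum>j\<in>{j\<in>{..a::nat}. \<rho> ^ j > eps}. eps powr (-\<tau>) * S ^ (b + j))
     \<le> (1 + 1 / ln (1/\<rho>)) * S ^ b * eps powr (-(\<tau> + ln S / ln (1/\<rho>) + 1))"
proof -
  define Js where "Js = {j\<in>{..a}. \<rho> ^ j > eps}"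
  define t where "t = ln (1/eps) / ln (1/\<rho>)"
  define c where "c = ln S / ln (1/\<rho>)"
  have lr: "ln (1/\<rho>) > 0" using rho by simp
  have le: "ln (1/eps) \<ge> 0" using eps by simp
  have t0: "t \<ge> 0" unfolding t_def using lr le by simp
  have c0: "c \<ge> 0" unfolding c_def using lr S by simp
  have jt: "real j < t" if "j \<in> Js" for j
  proof -
    have "eps < \<rho> ^ j" using that unfolding Js_def by auto
    then have "ln eps < ln (\<rho> ^ j)" using eps by simp
    also have "ln (\<rho> ^ j) = real j * ln \<rho>" using rho by (simp add: ln_realpow)
    finally have "real j * ln (1/\<rho>) < ln (1/eps)" using rho eps by (simp add: ln_div)
    then show ?thesis unfolding t_def using lr by (simp add: field_simps)
  qed
  have Sj: "S ^ j \<le> eps powr (-c)" if "j \<in> Js" for j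
  proof -
    have "S ^ j = exp (real j * ln S)" using S by (simp add: exp_of_nat_mult)
    also have "\<dots> \<le> exp (t * ln S)" using jt[OF that] S by (intro exp_le_cancel_iff[THEN iffD2] mult_right_mono) auto
    also have "t * ln S = ln (1/eps) * c" unfolding t_def c_def by simp
    also have "exp (ln (1/eps) * c) = eps powr (-c)"
      using eps by (simp add: powr_def ln_div)
    finally show ?thesis .
  qed
  have cardJs: "real (card Js) \<le> t + 1"
  proof -
    have "Js \<subseteq> {..<nat \<lceil>t\<rceil>}"
    proof
      fix j assume "j \<in> Js"
      then have "real j < t" by (rule jt)
      then have "real_of_int (int j) < t" by simp
      then have "int j < \<lceil>t\<rceil>" by (rule less_ceiling_iff[THEN iffD2])
      then have "j < nat \<lceil>t\<rceil>" by (simp only: zless_nat_eq_int_zless)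
      then show "j \<in> {..<nat \<lceil>t\<rceil>}" by simp
    qed
    then have "card Js \<le> card {..<nat \<lceil>t\<rceil>}" by (rule card_mono[OF finite_lessThan])
    then have "real (card Js) \<le> real (nat \<lceil>t\<rceil>)" by simp
    also have "real (nat \<lceil>t\<rceil>) = real_of_int \<lceil>t\<rceil>" using t0 by simp
    also have "\<dots> \<le> t + 1" by (rule of_int_ceiling_le_add_one)
    finally show ?thesis .
  qed
  have t1: "t + 1 \<le> (1 + 1 / ln (1/\<rho>)) * eps powr (-1)"
  proof -
    have l1: "ln (1/eps) \<le> 1/eps" using ln_le_minus_one[of "1/eps"] eps by simp
    have "t \<le> (1/eps) / ln (1/\<rho>)" unfolding t_def
      using divide_right_mono[OF l1, of "ln (1/\<rho>)"] lr by simp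
    moreover have "1 \<le> 1/eps" using eps by simp
    ultimately have "t + 1 \<le> 1/eps + (1/eps) / ln (1/\<rho>)" by simp
    also have "\<dots> = (1 + 1 / ln (1/\<rho>)) * eps powr (-1)"
      using eps by (simp add: powr_minus_divide field_simps)
    finally show ?thesis .
  qed
  have "(\<Sum>j\<in>Js. eps powr (-\<tau>) * S ^ (b + j)) \<le> (\<Sum>j\<in>Js. eps powr (-\<tau>) * S ^ b * eps powr (-c))"
  proof (rule sum_mono)
    fix j assume j: "j \<in> Js"
    have "eps powr (-\<tau>) * S ^ (b + j) = eps powr (-\<tau>) * S ^ b * S ^ j" by (simp add: power_add)
    also have "\<dots> \<le> eps powr (-\<tau>) * S ^ b * eps powr (-c)"
      using Sj[OF j] S by (intro mult_left_mono) auto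
    finally show "eps powr (-\<tau>) * S ^ (b + j) \<le> eps powr (-\<tau>) * S ^ b * eps powr (-c)" .
  qed
  also have "\<dots> = real (card Js) * (eps powr (-\<tau>) * S ^ b * eps powr (-c))" by simp
  also have "\<dots> \<le> ((1 + 1 / ln (1/\<rho>)) * eps powr (-1)) * (eps powr (-\<tau>) * S ^ b * eps powr (-c))"
    using cardJs t1 S by (intro mult_right_mono) auto
  also have "\<dots> = (1 + 1 / ln (1/\<rho>)) * S ^ b * (eps powr (-1) * eps powr (-\<tau>) * eps powr (-c))"
    by (simp only: mult_ac)
  also have "eps powr (-1) * eps powr (-\<tau>) * eps powr (-c) = eps powr (-(\<tau> + c + 1))"
  proof -
    have e: "-(\<tau> + c + 1) = -1 + -\<tau> + -c" by simp
    show ?thesis unfolding e by (simp only: powr_add)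
  qed
  finally show ?thesis unfolding Js_def c_def .
qed



locale setting =
  fixes lam :: "nat \<Rightarrow> real" and I :: "nat \<Rightarrow> nat set"
  assumes nonneg: "\<And>m. m \<ge> 1 \<Longrightarrow> lam m \<ge> 0"
    and noninc: "\<And>m. m \<ge> 1 \<Longrightarrow> lam (Suc m) \<le> lam m"
    and to_zero: "lam \<longlonglongrightarrow> 0"
    and lam2_pos: "lam 2 > 0"
    and I_sub: "\<And>d. d \<ge> 1 \<Longrightarrow> I d \<subseteq> {1..d}"
begin

definition mu :: "nat \<Rightarrow> real" where "mu m = lam m / lam 1"

lemma lam_mono: assumes "1 \<le> m" "m \<le> n" shows "lam n \<le> lam m"
  using assms(2)
proof (induction n rule: dec_induct)
  case base then show ?case by simp
next
  case (step n)
  then show ?case using noninc[of n] assms(1) by linarith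
qed

lemma lam1_pos: "lam 1 > 0" using lam_mono[of 1 2] lam2_pos by simp

lemma mu01: "m \<ge> 1 \<Longrightarrow> 0 \<le> mu m \<and> mu m \<le> 1"
  using lam_mono[of 1 m] nonneg[of m] lam1_pos unfolding mu_def by auto

lemma mu_1: "mu 1 = 1" using lam1_pos unfolding mu_def by simp

lemma mu_mono: "1 \<le> m \<Longrightarrow> m \<le> n \<Longrightarrow> mu n \<le> mu m"
  using lam_mono lam1_pos unfolding mu_def by (simp add: divide_right_mono)

lemma mu_lim: "mu \<longlonglongrightarrow> 0"
  unfolding mu_def using tendsto_divide_zero[OF to_zero, of "lam 1"] by simp

lemma mu2_pos: "mu 2 > 0" using lam2_pos lam1_pos unfolding mu_def by simp

lemma summ_iff: "summable (\<lambda>m. lam (Suc m) powr \<tau>) \<longleftrightarrow> summable (\<lambda>m. mu (Suc m) powr \<tau>)"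
proof -
  have eq1: "lam (Suc m) powr \<tau> = lam 1 powr \<tau> * mu (Suc m) powr \<tau>" for m
  proof -
    have "lam (Suc m) = lam 1 * mu (Suc m)" using lam1_pos unfolding mu_def by simp
    then show ?thesis by (simp only: powr_mult)
  qed
  have eq: "(\<lambda>m. lam (Suc m) powr \<tau>) = (\<lambda>m. lam 1 powr \<tau> * mu (Suc m) powr \<tau>)"
    by (rule ext) (rule eq1)
  have c: "lam 1 powr \<tau> \<noteq> 0" using lam1_pos by simp
  show ?thesis unfolding eq summable_cmult_iff using c by simp
qed

lemma k1_in: assumes "d \<ge> 1" shows "(\<lambda>l. if l \<in> {1..d} then 1 else 0) \<in> nabla_sym I d"
  using I_sub[OF assms] unfolding nabla_sym_def by auto

lemma lam_dk_le: assumes "k \<in> nabla_sym I d" shows "lam_dk lam d k \<le> lam 1 ^ d"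
proof -
  have "lam_dk lam d k \<le> (\<Prod>l\<in>{1..d}. lam 1)" unfolding lam_dk_def
  proof (rule prod_mono)
    fix l assume "l \<in> {1..d}"
    then have "1 \<le> k l" using assms unfolding nabla_sym_def by auto
    then show "0 \<le> lam (k l) \<and> lam (k l) \<le> lam 1" using nonneg lam_mono by auto
  qed
  then show ?thesis by simp
qed

lemma eps_init_eq: assumes "d \<ge> 1" shows "eps_init lam I d = sqrt (lam 1 ^ d)"
proof -
  have e: "lam_dk lam d (\<lambda>l. if l \<in> {1..d} then 1 else 0) = lam 1 ^ d"
    unfolding lam_dk_def by simp
  have "Sup (lam_dk lam d ` nabla_sym I d) = lam 1 ^ d"
  proof (rule cSup_eq_maximum)
    show "lam 1 ^ d \<in> lam_dk lam d ` nabla_sym I d"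
      using k1_in[OF assms] e by (metis image_eqI)
    fix x assume "x \<in> lam_dk lam d ` nabla_sym I d"
    then obtain k where "k \<in> nabla_sym I d" "x = lam_dk lam d k" by blast
    then show "x \<le> lam 1 ^ d" using lam_dk_le by simp
  qed
  then show ?thesis unfolding eps_init_def by simp
qed

lemma count_eq: assumes "d \<ge> 1" "e > 0"
  shows "info_compl lam I (e * eps_init lam I d) d
     = card {k \<in> nabla_sym (\<lambda>_. I d) d. (\<Prod>l\<in>{1..d}. mu (k l)) > e\<^sup>2}"
proof -
  have nab: "nabla_sym I d = nabla_sym (\<lambda>_. I d) d" unfolding nabla_sym_def by simp
  have L1: "lam 1 ^ d > 0" using lam1_pos by simp
  have "lam_dk lam d k > (e * eps_init lam I d)\<^sup>2 \<longleftrightarrow> (\<Prod>l\<in>{1..d}. mu (k l)) > e\<^sup>2" for k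
  proof -
    have p: "(\<Prod>l\<in>{1..d}. mu (k l)) = lam_dk lam d k / lam 1 ^ d"
      unfolding mu_def lam_dk_def by (simp add: prod_dividef)
    have "(e * eps_init lam I d)\<^sup>2 = e\<^sup>2 * lam 1 ^ d"
      using eps_init_eq[OF assms(1)] L1 by (simp add: power_mult_distrib)
    then show ?thesis unfolding p using L1 by (simp add: pos_less_divide_eq)
  qed
  then have "{k \<in> nabla_sym (\<lambda>_. I d) d. lam_dk lam d k > (e * eps_init lam I d)\<^sup>2}
     = {k \<in> nabla_sym (\<lambda>_. I d) d. (\<Prod>l\<in>{1..d}. mu (k l)) > e\<^sup>2}" by blast
  then show ?thesis unfolding info_compl_def nab by simp
qed

end


lemma sqrt_powr: fixes x a :: real shows "0 \<le> x \<Longrightarrow> sqrt x powr a = x powr (a / 2)"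
  by (simp add: powr_half_sqrt[symmetric] powr_powr)

lemma sq_powr: fixes e a :: real shows "0 < e \<Longrightarrow> (e\<^sup>2) powr a = e powr (2 * a)"
proof -
  assume e: "0 < e"
  have "e\<^sup>2 = e powr (real 2)" using e by (simp only: powr_realpow)
  then show ?thesis by (simp add: powr_powr)
qed

context setting
begin

lemma S_ge1: assumes "summable (\<lambda>m. mu (Suc m) powr \<tau>)" shows "(\<Sum>m. mu (Suc m) powr \<tau>) \<ge> 1"
proof -
  have "(\<Sum>m\<in>{0}. mu (Suc m) powr \<tau>) \<le> (\<Sum>m. mu (Suc m) powr \<tau>)"
    using assms by (intro sum_le_suminf) auto
  then show ?thesis using mu_1 by simp
qed

lemma upper_main:
  assumes tau: "\<tau> > 0" and summ: "summable (\<lambda>m. mu (Suc m) powr \<tau>)"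
    and M: "1 \<le> M" and rho: "0 < \<rho>" "\<rho> < 1" "\<And>m. M < m \<Longrightarrow> mu m \<le> \<rho>"
  shows "\<exists>C1 p. C1 > 0 \<and> p > 0 \<and> (\<forall>d\<ge>1. \<forall>e\<in>{0<..1::real}.
     real (info_compl lam I (e * eps_init lam I d) d)
       \<le> real ((card (I d) + 1) ^ (M - 1)) * C1 * (\<Sum>m. mu (Suc m) powr \<tau>) ^ (d - card (I d)) * e powr (-p))"
proof -
  define S where "S = (\<Sum>m. mu (Suc m) powr \<tau>)"
  define C1 where "C1 = 1 + 1 / ln (1/\<rho>)"
  define c where "c = ln S / ln (1/\<rho>)"
  have S1: "S \<ge> 1" unfolding S_def by (rule S_ge1[OF summ])
  have lr: "ln (1/\<rho>) > 0" using rho by simp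
  have C1: "C1 > 0" unfolding C1_def using lr by (simp add: add_pos_nonneg)
  have c0: "c \<ge> 0" unfolding c_def using lr S1 by simp
  show ?thesis
  proof (intro exI conjI allI impI ballI)
    show "C1 > 0" by (rule C1)
    show "2 * (\<tau> + c + 1) > 0" using tau c0 by simp
    fix d :: nat and e :: real assume d: "1 \<le> d" and e: "e \<in> {0<..1}"
    have e0: "0 < e\<^sup>2" "e\<^sup>2 \<le> 1" using e by (auto simp: power_le_one)
    have "real (info_compl lam I (e * eps_init lam I d) d)
       = real (card {k \<in> nabla_sym (\<lambda>_. I d) d. (\<Prod>l\<in>{1..d}. mu (k l)) > e\<^sup>2})"
      using count_eq[OF d] e by simp
    also have "\<dots> \<le> real ((card (I d) + 1) ^ (M - 1)) *
        (\<Sum>j\<in>{j\<in>{..card (I d)}. \<rho> ^ j > e\<^sup>2}. (e\<^sup>2) powr (-\<tau>) * S ^ (d - card (I d) + j))"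
      unfolding S_def using upper_count[OF I_sub[OF d] mu01 mu_lim tau summ M rho(3) e0(1)] .
    also have "\<dots> \<le> real ((card (I d) + 1) ^ (M - 1)) *
        (C1 * S ^ (d - card (I d)) * (e\<^sup>2) powr (-(\<tau> + c + 1)))"
      unfolding C1_def c_def
      by (intro mult_left_mono sum_j_bound[OF rho(1,2) S1 e0 tau]) simp
    also have "(e\<^sup>2) powr (-(\<tau> + c + 1)) = e powr (- (2 * (\<tau> + c + 1)))"
      using e by (simp add: sq_powr)
    finally show "real (info_compl lam I (e * eps_init lam I d) d)
       \<le> real ((card (I d) + 1) ^ (M - 1)) * C1 * (\<Sum>m. mu (Suc m) powr \<tau>) ^ (d - card (I d)) * e powr (- (2 * (\<tau> + c + 1)))"
      unfolding S_def by (simp add: mult.assoc)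
  qed
qed
lemma fin_count: assumes eps: "eps > 0" shows "finite {k \<in> nabla_sym J d. (\<Prod>l\<in>{1..d}. mu (k l)) > eps}"
proof -
  have "eventually (\<lambda>m. mu m < eps) sequentially"
    using order_tendstoD(2)[OF mu_lim eps] .
  then obtain K where K: "\<And>m. m \<ge> K \<Longrightarrow> mu m < eps" by (auto simp: eventually_sequentially)
  have "{k \<in> nabla_sym J d. (\<Prod>l\<in>{1..d}. mu (k l)) > eps}
     \<subseteq> {f. \<forall>x. (x \<in> {1..d} \<longrightarrow> f x \<in> {..<K}) \<and> (x \<notin> {1..d} \<longrightarrow> f x = 0)}"
  proof
    fix k assume k: "k \<in> {k \<in> nabla_sym J d. (\<Prod>l\<in>{1..d}. mu (k l)) > eps}"
    have pos: "\<And>l. l \<in> {1..d} \<Longrightarrow> 1 \<le> k l" and out: "\<And>l. l \<notin> {1..d} \<Longrightarrow> k l = 0"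
      and pr: "(\<Prod>l\<in>{1..d}. mu (k l)) > eps"
      using k unfolding nabla_sym_def by auto
    have "k l < K" if l: "l \<in> {1..d}" for l
    proof (rule ccontr)
      assume "\<not> k l < K"
      then have "mu (k l) < eps" using K by auto
      moreover have "(\<Prod>i\<in>{1..d}. mu (k i)) \<le> (\<Prod>i\<in>{l}. mu (k i))"
      proof (rule prod_subset_le[where f="\<lambda>i. mu (k i)"])
        show "finite {1..d}" by simp
        show "{l} \<subseteq> {1..d}" using l by auto
        fix x assume "x \<in> {1..d}"
        then show "0 \<le> mu (k x) \<and> mu (k x) \<le> 1" using mu01 pos by auto
      qed
      ultimately show False using pr by simp
    qed
    then show "k \<in> {f. \<forall>x. (x \<in> {1..d} \<longrightarrow> f x \<in> {..<K}) \<and> (x \<notin> {1..d} \<longrightarrow> f x = 0)}"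
      using out by auto
  qed
  moreover have "finite {f. \<forall>x. (x \<in> {1..d} \<longrightarrow> f x \<in> {..<K}) \<and> (x \<notin> {1..d} \<longrightarrow> (f x :: nat) = 0)}"
    by (rule finite_set_of_finite_funs) auto
  ultimately show ?thesis by (rule finite_subset)
qed

lemma count_ge:
  assumes d: "d \<ge> 1" and e: "e > 0" and X: "finite X" "inj_on f X"
    and sub: "\<And>x. x \<in> X \<Longrightarrow> f x \<in> nabla_sym (\<lambda>_. I d) d \<and> (\<Prod>l\<in>{1..d}. mu (f x l)) > e\<^sup>2"
  shows "card X \<le> info_compl lam I (e * eps_init lam I d) d"
proof -
  have "card X = card (f ` X)" using X by (simp add: card_image)
  also have "\<dots> \<le> card {k \<in> nabla_sym (\<lambda>_. I d) d. (\<Prod>l\<in>{1..d}. mu (k l)) > e\<^sup>2}"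
    using sub e by (intro card_mono fin_count) auto
  finally show ?thesis using count_eq[OF d e] by simp
qed

lemma summable_from_bound:
  assumes p: "p > 0"
    and bnd: "\<forall>e\<in>{0<..1::real}. real (info_compl lam I (e * eps_init lam I 1) 1) \<le> C * e powr (-p)"
  shows "summable (\<lambda>m. mu (Suc m) powr p)"
proof -
  have I1: "I 1 \<subseteq> {1}" using I_sub[of 1] by simp
  have key: "real n \<le> C * (mu n / 2) powr (-p/2)" if n: "n \<ge> 1" and mn: "mu n > 0" for n
  proof -
    define e where "e = sqrt (mu n / 2)"
    have e0: "e > 0" unfolding e_def using mn by simp
    have e1: "e \<le> 1" unfolding e_def using mu01[OF n] by simp
    have esq: "e\<^sup>2 = mu n / 2" unfolding e_def using mn by simp
    define km where "km m = (\<lambda>l::nat. if l = 1 then m else (0::nat))" for m :: nat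
    have "card {1..n} \<le> info_compl lam I (e * eps_init lam I 1) 1"
    proof (rule count_ge[where f = km])
      show "inj_on km {1..n}" unfolding km_def by (rule inj_onI) (metis)
      fix m assume m: "m \<in> {1..n}"
      have "km m \<in> nabla_sym (\<lambda>_. I 1) 1" unfolding nabla_sym_def km_def using m I1 by auto
      moreover have "(\<Prod>l\<in>{1..1}. mu (km m l)) = mu m" unfolding km_def by simp
      moreover have "mu n \<le> mu m" using m by (intro mu_mono) auto
      ultimately show "km m \<in> nabla_sym (\<lambda>_. I 1) 1 \<and> (\<Prod>l\<in>{1..1}. mu (km m l)) > e\<^sup>2"
        using esq mn by simp
    qed (use e0 in auto)
    then have "real n \<le> real (info_compl lam I (e * eps_init lam I 1) 1)" by simp
    also have "\<dots> \<le> C * e powr (-p)" using bnd e0 e1 by auto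
    also have "e powr (-p) = (mu n / 2) powr (-p/2)" unfolding e_def using mn by (simp add: sqrt_powr)
    finally show ?thesis .
  qed
  have bound: "mu (Suc m) powr p \<le> 2 powr p * C\<^sup>2 * inverse (real (Suc m) ^ 2)" for m
  proof (cases "mu (Suc m) = 0")
    case True then show ?thesis by simp
  next
    case False
    define n where "n = Suc m"
    define x where "x = mu n / 2"
    have mn: "mu n > 0" using False mu01[of n] unfolding n_def by simp
    have x0: "x > 0" unfolding x_def using mn by simp
    have k: "real n \<le> C * x powr (-p/2)" unfolding x_def using key[of n] mn n_def by simp
    have y: "x powr (p/2) \<ge> 0" by simp
    have "real n * x powr (p/2) \<le> C * x powr (-p/2) * x powr (p/2)"
      by (rule mult_right_mono[OF k y])
    also have "C * x powr (-p/2) * x powr (p/2) = C" using x0 by (simp add: mult.assoc powr_add[symmetric])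
    finally have "real n * x powr (p/2) \<le> C" .
    then have xp: "x powr (p/2) \<le> C / real n" unfolding n_def by (simp add: field_simps)
    have "x powr p = (x powr (p/2))\<^sup>2" by (simp add: power2_eq_square powr_add[symmetric])
    also have "\<dots> \<le> (C / real n)\<^sup>2" using xp by (intro power_mono) auto
    finally have xp2: "x powr p \<le> (C / real n)\<^sup>2" .
    have "mu n powr p = (2 * x) powr p" unfolding x_def by simp
    also have "\<dots> = 2 powr p * x powr p" by (simp add: powr_mult)
    also have "\<dots> \<le> 2 powr p * (C / real n)\<^sup>2" using xp2 by (intro mult_left_mono) auto
    also have "\<dots> = 2 powr p * C\<^sup>2 * inverse (real n ^ 2)" by (simp add: power_mult_distrib power_inverse divide_inverse)
    finally show ?thesis unfolding n_def .
  qed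
  have "summable (\<lambda>m. inverse (real (Suc m) ^ 2))"
    using inverse_power_summable[of 2, where 'a=real] by (subst summable_Suc_iff) simp
  then have "summable (\<lambda>m. 2 powr p * C\<^sup>2 * inverse (real (Suc m) ^ 2))" by (rule summable_mult)
  then show ?thesis
    by (rule summable_comparison_test'[where N=0]) (use bound in auto)
qed

lemma lam12_from_bound:
  assumes bnd: "\<forall>d\<ge>1. \<forall>e\<in>{0<..1::real}. real (info_compl lam I (e * eps_init lam I d) d) \<le> C * e powr (-p)"
  shows "mu 2 < 1"
proof (rule ccontr)
  assume "\<not> mu 2 < 1"
  then have m2: "mu 2 = 1" using mu01[of 2] by simp
  have main: "real (Suc d) \<le> C * (1/2) powr (-p)" if d: "d \<ge> 1" for d
  proof -
    define kj where "kj j = (\<lambda>l::nat. if l \<in> {1..d} then (if j \<le> l then 2 else 1) else (0::nat))" for j :: nat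
    have "card {1..Suc d} \<le> info_compl lam I ((1/2) * eps_init lam I d) d"
    proof (rule count_ge[where f = kj])
      show "inj_on kj {1..Suc d}"
      proof (rule inj_onI)
        fix j j' assume jj: "j \<in> {1..Suc d}" "j' \<in> {1..Suc d}" "kj j = kj j'"
        show "j = j'"
        proof (rule ccontr)
          assume ne: "j \<noteq> j'"
          show False
          proof (cases "j < j'")
            case True
            then have "kj j j = 2" "kj j' j = 1" using jj unfolding kj_def by auto
            then show False using jj(3) by simp
          next
            case False
            then have "j' < j" using ne by simp
            then have "kj j' j' = 2" "kj j j' = 1" using jj unfolding kj_def by auto
            then show False using jj(3) by simp
          qed
        qed
      qed
      fix j assume j: "j \<in> {1..Suc d}"
      have "kj j \<in> nabla_sym (\<lambda>_. I d) d" unfolding nabla_sym_def kj_def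
        using I_sub[OF d] by (auto simp: subset_iff)
      moreover have "(\<Prod>l\<in>{1..d}. mu (kj j l)) = 1"
        by (rule prod.neutral) (use mu_1 m2 in \<open>auto simp: kj_def\<close>)
      ultimately show "kj j \<in> nabla_sym (\<lambda>_. I d) d \<and> (\<Prod>l\<in>{1..d}. mu (kj j l)) > (1/2)\<^sup>2"
        by (simp add: power2_eq_square)
    qed (use d in auto)
    then have "real (Suc d) \<le> real (info_compl lam I ((1/2) * eps_init lam I d) d)" by simp
    also have "\<dots> \<le> C * (1/2) powr (-p)"
    proof -
      have h: "(1/2::real) \<in> {0<..1}" by simp
      have "\<forall>e\<in>{0<..1::real}. real (info_compl lam I (e * eps_init lam I d) d) \<le> C * e powr (-p)"
        using bnd d by blast
      from bspec[OF this h] show ?thesis .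
    qed
    finally show ?thesis .
  qed
  define d where "d = nat \<lceil>C * (1/2) powr (-p)\<rceil> + 1"
  have "real (Suc d) \<le> C * (1/2) powr (-p)" using main[of d] unfolding d_def by simp
  moreover have "C * (1/2) powr (-p) \<le> real (nat \<lceil>C * (1/2) powr (-p)\<rceil>)" by linarith
  ultimately show False unfolding d_def by simp
qed

lemma choose_bound:
  assumes p: "p > 0" and d: "d \<ge> 1"
    and bnd: "\<forall>e\<in>{0<..1::real}. real (info_compl lam I (e * eps_init lam I d) d) \<le> C * e powr (-p) * real d powr q"
    and s: "s \<le> card ({1..d} - I d)"
  shows "real (card ({1..d} - I d) choose s) \<le> C * 2 powr (p/2) * (mu 2 powr (-p/2)) ^ s * real d powr q"
proof -
  define F where "F = {1..d} - I d"
  define e where "e = sqrt (mu 2 ^ s / 2)"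
  have m2: "0 < mu 2" "mu 2 \<le> 1" using mu2_pos mu01[of 2] by auto
  have ms: "0 < mu 2 ^ s" "mu 2 ^ s \<le> 1" using m2 by (auto simp: power_le_one)
  have e0: "e > 0" unfolding e_def using ms by simp
  have e1: "e \<le> 1" unfolding e_def using ms by simp
  have esq: "e\<^sup>2 = mu 2 ^ s / 2" unfolding e_def using ms by simp
  define X where "X = {T. T \<subseteq> F \<and> card T = s}"
  define f where "f T = (\<lambda>l::nat. if l \<in> {1..d} then (if l \<in> T then 2 else 1) else (0::nat))" for T
  have finF: "finite F" unfolding F_def by simp
  have "card X \<le> info_compl lam I (e * eps_init lam I d) d"
  proof (rule count_ge[where f = f])
    show "finite X" unfolding X_def using finF by simp
    show "inj_on f X"
    proof (rule inj_onI)
      fix T T' assume TT: "T \<in> X" "T' \<in> X" "f T = f T'"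
      have "T = {l \<in> {1..d}. f T l = 2}" using TT(1) unfolding X_def F_def f_def by auto
      also have "\<dots> = {l \<in> {1..d}. f T' l = 2}" using TT(3) by simp
      also have "\<dots> = T'" using TT(2) unfolding X_def F_def f_def by auto
      finally show "T = T'" .
    qed
    fix T assume T: "T \<in> X"
    have TF: "T \<subseteq> F" "card T = s" using T unfolding X_def by auto
    have "f T \<in> nabla_sym (\<lambda>_. I d) d"
      using TF(1) I_sub[OF d] unfolding nabla_sym_def f_def F_def by (auto simp: subset_iff)
    moreover have "(\<Prod>l\<in>{1..d}. mu (f T l)) = mu 2 ^ s"
    proof -
      have "(\<Prod>l\<in>{1..d}. mu (f T l)) = (\<Prod>l\<in>{1..d}. if l \<in> T then mu 2 else 1)"
        using mu_1 unfolding f_def by (intro prod.cong) auto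
      also have "\<dots> = (\<Prod>l\<in>{1..d} \<inter> {l. l \<in> T}. mu 2) * (\<Prod>l\<in>{1..d} \<inter> - {l. l \<in> T}. 1)"
        by (rule prod.If_cases) simp
      also have "{1..d} \<inter> {l. l \<in> T} = T" using TF(1) unfolding F_def by auto
      finally show ?thesis using TF(2) by simp
    qed
    ultimately show "f T \<in> nabla_sym (\<lambda>_. I d) d \<and> (\<Prod>l\<in>{1..d}. mu (f T l)) > e\<^sup>2"
      using esq ms by simp
  qed (use d e0 in auto)
  moreover have "card X = card F choose s" unfolding X_def using finF by (rule n_subsets)
  ultimately have "real (card F choose s) \<le> real (info_compl lam I (e * eps_init lam I d) d)" by simp
  also have "\<dots> \<le> C * e powr (-p) * real d powr q" using bnd e0 e1 by auto
  also have "e powr (-p) = 2 powr (p/2) * (mu 2 powr (-p/2)) ^ s"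
  proof -
    have "e powr (-p) = (mu 2 ^ s / 2) powr (-p/2)" unfolding e_def using ms by (simp add: sqrt_powr)
    also have "\<dots> = (mu 2 ^ s) powr (-p/2) / 2 powr (-p/2)" by (rule powr_divide)
    also have "(mu 2 ^ s) powr (-p/2) = (mu 2 powr (-p/2)) ^ s"
    proof -
      have "mu 2 ^ s = mu 2 powr (real s)" using m2 by (simp add: powr_realpow)
      then have "(mu 2 ^ s) powr (-p/2) = mu 2 powr (real s * (-p/2))" by (simp add: powr_powr)
      also have "\<dots> = (mu 2 powr (-p/2)) ^ s" using m2 by (simp add: powr_power)
      finally show ?thesis .
    qed
    also have "1 / 2 powr (-p/2) = (2::real) powr (p/2)" by (simp add: powr_minus_divide)
    then have "(mu 2 powr (-p/2)) ^ s / 2 powr (-p/2) = 2 powr (p/2) * (mu 2 powr (-p/2)) ^ s"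
      by (metis divide_inverse inverse_eq_divide mult.commute)
    finally show ?thesis .
  qed
  finally show ?thesis unfolding F_def by (simp add: mult_ac)
qed

lemma b_bound:
  assumes p: "p > 0" and q: "q \<ge> 0"
    and bnd: "\<forall>d\<ge>1. \<forall>e\<in>{0<..1::real}. real (info_compl lam I (e * eps_init lam I d) d) \<le> C * e powr (-p) * real d powr q"
  shows "\<exists>K1 K2. K2 \<ge> 0 \<and> (q = 0 \<longrightarrow> K2 = 0) \<and> (\<forall>d\<ge>1. real (d - card (I d)) \<le> K1 + K2 * ln (real d))"
proof -
  define A where "A = mu 2 powr (-p/2)"
  define C' where "C' = C * 2 powr (p/2)"
  define K1 where "K1 = 2*A + 2*A*\<bar>ln C'\<bar> / ln 2"
  define K2 where "K2 = 2*A*q / ln 2"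
  have m2: "0 < mu 2" "mu 2 \<le> 1" using mu2_pos mu01[of 2] by auto
  have A1: "A \<ge> 1"
  proof -
    have "mu 2 powr (p/2) \<le> 1" using m2 p by (intro powr_le1) auto
    moreover have "mu 2 powr (p/2) > 0" using m2 by simp
    ultimately show ?thesis unfolding A_def by (simp add: powr_minus_divide)
  qed
  have K2nn: "K2 \<ge> 0" unfolding K2_def using A1 q by simp
  have bd: "real (d - card (I d)) \<le> K1 + K2 * ln (real d)" if d: "d \<ge> 1" for d
  proof -
    define b where "b = card ({1..d} - I d)"
    have finI: "finite (I d)" using I_sub[OF d] finite_subset by blast
    have bdef: "b = d - card (I d)" unfolding b_def using I_sub[OF d] finI by (simp add: card_Diff_subset)
    have lnd: "ln (real d) \<ge> 0" using d by simp
    have K2l: "K2 * ln (real d) \<ge> 0" using K2nn lnd by simp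
    have K1A: "K1 \<ge> 2 * A" unfolding K1_def using A1 by simp
    define s where "s = nat \<lfloor>real b / (2*A)\<rfloor>"
    have q0: "real b / (2*A) \<ge> 0" using A1 by simp
    have s_le: "real s \<le> real b / (2*A)" unfolding s_def using q0 by linarith
    have s_gt: "real b / (2*A) < real s + 1" unfolding s_def using q0 by linarith
    have bs: "real b < 2*A * (real s + 1)" using s_gt A1 by (simp add: field_simps)
    show ?thesis
    proof (cases "s = 0")
      case True
      then have "real b < 2*A" using bs by simp
      then show ?thesis using K1A K2l unfolding bdef by simp
    next
      case False
      then have s1: "real s \<ge> 1" by simp
      have "real b \<le> real b * (2 * A)" using A1 by (simp add: mult_le_cancel_left1)
      then have "real b / (2*A) \<le> real b" using A1 by (simp add: divide_le_eq)
      then have sb: "s \<le> b" using s_le by linarith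
      have bnd_d: "\<forall>e\<in>{0<..1::real}. real (info_compl lam I (e * eps_init lam I d) d) \<le> C * e powr (-p) * real d powr q"
        using bnd d by blast
      have cb: "real (b choose s) \<le> C' * A ^ s * real d powr q"
        using choose_bound[OF p d bnd_d, of s] sb unfolding b_def C'_def A_def by simp
      have "2 * A \<le> real b / real s" using s_le s1 A1 by (simp add: field_simps)
      then have "(2 * A) ^ s \<le> (real b / real s) ^ s" using A1 by (intro power_mono) auto
      also have "\<dots> \<le> real (b choose s)" using sb by (rule binomial_ge_n_over_k_pow_k)
      also note cb
      finally have "2 ^ s * A ^ s \<le> C' * real d powr q * A ^ s" by (simp add: power_mult_distrib mult_ac)
      then have two: "2 ^ s \<le> C' * real d powr q" using A1 by simp
      have dq: "real d powr q > 0" using d by simp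
      have Cpos: "C' > 0"
      proof (rule ccontr)
        assume "\<not> C' > 0"
        then have "C' * real d powr q \<le> 0" using dq by (simp add: mult_nonpos_nonneg)
        then show False using two by (smt (verit) zero_less_power)
      qed
      have "real s * ln 2 = ln (2 ^ s)" by (simp add: ln_realpow)
      also have "\<dots> \<le> ln (C' * real d powr q)" using two Cpos dq by (subst ln_le_cancel_iff) auto
      also have "\<dots> = ln C' + q * ln (real d)" using Cpos dq d by (simp add: ln_mult)
      also have "\<dots> \<le> \<bar>ln C'\<bar> + q * ln (real d)" by simp
      finally have "real s * ln 2 \<le> \<bar>ln C'\<bar> + q * ln (real d)" .
      then have ss: "real s \<le> (\<bar>ln C'\<bar> + q * ln (real d)) / ln 2" by (simp add: field_simps)
      have "real b < 2*A * real s + 2*A" using bs by (simp add: algebra_simps)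
      also have "2*A * real s \<le> 2*A * ((\<bar>ln C'\<bar> + q * ln (real d)) / ln 2)"
        using ss A1 by (intro mult_left_mono) auto
      finally have "real b < 2*A * ((\<bar>ln C'\<bar> + q * ln (real d)) / ln 2) + 2*A" by simp
      also have "\<dots> = K1 + K2 * ln (real d)" unfolding K1_def K2_def by (simp add: field_simps)
      finally show ?thesis unfolding bdef by simp
    qed
  qed
  show ?thesis using K2nn bd unfolding K2_def by (intro exI[of _ K1] exI[of _ K2]) (auto simp: K2_def)
qed

end


context setting
begin

lemma PT_imp:
  assumes "poly_tractable lam I"
  shows "(\<exists>\<tau>>0. summable (\<lambda>m. lam (Suc m) powr \<tau>)) \<and> (\<lambda>d. real (d - card (I d))) \<in> O(\<lambda>d. ln (real d))"
proof -
  obtain C p q where Cpq: "C > 0" "p > 0" "q \<ge> 0"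
    and bnd: "\<forall>d\<ge>1. \<forall>e\<in>{0<..1::real}. real (info_compl lam I (e * eps_init lam I d) d) \<le> C * e powr (-p) * real d powr q"
    using assms unfolding poly_tractable_def by blast
  have bnd1: "\<forall>e\<in>{0<..1::real}. real (info_compl lam I (e * eps_init lam I 1) 1) \<le> C * e powr (-p)"
    using bnd by auto
  have "summable (\<lambda>m. mu (Suc m) powr p)" by (rule summable_from_bound[OF Cpq(2) bnd1])
  then have s: "\<exists>\<tau>>0. summable (\<lambda>m. lam (Suc m) powr \<tau>)" using Cpq(2) summ_iff by blast
  obtain K1 K2 where K: "K2 \<ge> 0" "\<And>d. d \<ge> 1 \<Longrightarrow> real (d - card (I d)) \<le> K1 + K2 * ln (real d)"
    using b_bound[OF Cpq(2,3) bnd] by blast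
  have "(\<lambda>d. real (d - card (I d))) \<in> O(\<lambda>d. ln (real d))"
  proof (rule landau_o.bigI[where c = "\<bar>K1\<bar> + K2 + 1"])
    show "\<bar>K1\<bar> + K2 + 1 > 0" using K(1) by simp
    show "eventually (\<lambda>d. norm (real (d - card (I d))) \<le> (\<bar>K1\<bar> + K2 + 1) * norm (ln (real d))) at_top"
      using eventually_ge_at_top[of "3::nat"]
    proof eventually_elim
      case (elim d)
      have l1: "ln (real d) \<ge> 1"
      proof -
        have "exp 1 \<le> (3::real)" using exp_le by simp
        also have "\<dots> \<le> real d" using elim by simp
        finally have "exp 1 \<le> real d" .
        then have "ln (exp 1) \<le> ln (real d)" using elim by (subst ln_le_cancel_iff) auto
        then show ?thesis by simp
      qed
      have "real (d - card (I d)) \<le> K1 + K2 * ln (real d)" using K(2) elim by simp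
      also have "\<dots> \<le> (\<bar>K1\<bar> + K2 + 1) * ln (real d)" using l1 K(1)
        by (simp add: algebra_simps) (smt (verit) mult_le_cancel_left1 mult_nonneg_nonneg)
      finally show ?case using l1 by simp
    qed
  qed
  then show ?thesis using s by blast
qed

lemma PT_conv:
  assumes s: "\<exists>\<tau>>0. summable (\<lambda>m. lam (Suc m) powr \<tau>)"
    and o: "(\<lambda>d. real (d - card (I d))) \<in> O(\<lambda>d. ln (real d))"
  shows "poly_tractable lam I"
proof -
  obtain \<tau> where tau: "\<tau> > 0" and summl: "summable (\<lambda>m. lam (Suc m) powr \<tau>)" using s by blast
  have summ: "summable (\<lambda>m. mu (Suc m) powr \<tau>)" using summl summ_iff by blast
  obtain c where c: "c > 0" and ev: "eventually (\<lambda>d. norm (real (d - card (I d))) \<le> c * norm (ln (real d))) at_top"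
    using landau_o.bigE[OF o] by blast
  then obtain N where N: "\<And>d. d \<ge> N \<Longrightarrow> norm (real (d - card (I d))) \<le> c * norm (ln (real d))"
    by (auto simp: eventually_at_top_linorder)
  have "eventually (\<lambda>m. mu m < 1/2) sequentially"
    using order_tendstoD(2)[OF mu_lim, of "1/2"] by simp
  then obtain M0 where M0: "\<And>m. m \<ge> M0 \<Longrightarrow> mu m < 1/2" by (auto simp: eventually_sequentially)
  define M where "M = max M0 1"
  have M1: "1 \<le> M" unfolding M_def by simp
  have rho: "\<And>m. M < m \<Longrightarrow> mu m \<le> 1/2" using M0 unfolding M_def by (simp add: less_imp_le)
  obtain C1 p where C1: "C1 > 0" "p > 0" and ub: "\<forall>d\<ge>1. \<forall>e\<in>{0<..1::real}.
     real (info_compl lam I (e * eps_init lam I d) d)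
       \<le> real ((card (I d) + 1) ^ (M - 1)) * C1 * (\<Sum>m. mu (Suc m) powr \<tau>) ^ (d - card (I d)) * e powr (-p)"
    using upper_main[OF tau summ M1 _ _ rho] by force
  define S where "S = (\<Sum>m. mu (Suc m) powr \<tau>)"
  have S1: "S \<ge> 1" unfolding S_def by (rule S_ge1[OF summ])
  define N' where "N' = max N 1"
  define q where "q = real (M - 1) + c * ln S"
  define C where "C = 2 ^ (M - 1) * C1 * S ^ N'"
  have q0: "q \<ge> 0" unfolding q_def using c S1 by simp
  have C0: "C > 0" unfolding C_def using C1 S1 by simp
  have main: "real (info_compl lam I (e * eps_init lam I d) d) \<le> C * e powr (-p) * real d powr q"
    if d: "d \<ge> 1" and e: "e \<in> {0<..1}" for d e
  proof -
    define a where "a = card (I d)"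
    define b where "b = d - card (I d)"
    have ad: "a \<le> d" unfolding a_def using card_mono[OF _ I_sub[OF d]] by simp
    have dp: "real d > 0" using d by simp
    have A: "real ((a + 1) ^ (M - 1)) \<le> 2 ^ (M - 1) * real d powr real (M - 1)"
    proof -
      have "real ((a + 1) ^ (M - 1)) = real (a + 1) ^ (M - 1)" by simp
      also have "\<dots> \<le> (2 * real d) ^ (M - 1)" using ad d by (intro power_mono) auto
      also have "\<dots> = 2 ^ (M - 1) * real d ^ (M - 1)" by (simp add: power_mult_distrib)
      also have "real d ^ (M - 1) = real d powr real (M - 1)" using dp by (simp add: powr_realpow)
      finally show ?thesis .
    qed
    have dpow: "real d powr (c * ln S) \<ge> 1" using d c S1 by (intro ge_one_powr_ge_zero) auto
    have SN: "S ^ N' \<ge> 1" using S1 by simp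
    have B: "S ^ b \<le> S ^ N' * real d powr (c * ln S)"
    proof (cases "d \<ge> N")
      case True
      have lnd: "ln (real d) \<ge> 0" using d by simp
      have "real b \<le> c * ln (real d)" using N[OF True] lnd unfolding b_def by simp
      have "S ^ b = S powr real b" using S1 by (simp add: powr_realpow)
      also have "\<dots> \<le> S powr (c * ln (real d))" using \<open>real b \<le> c * ln (real d)\<close> S1 by (intro powr_mono) auto
      also have "\<dots> = real d powr (c * ln S)" using S1 dp by (simp add: powr_def mult_ac)
      also have "\<dots> \<le> S ^ N' * real d powr (c * ln S)" using mult_right_mono[OF SN, of "real d powr (c * ln S)"] by simp
      finally show ?thesis .
    next
      case False
      then have "b \<le> N'" unfolding b_def N'_def by simp
      then have "S ^ b \<le> S ^ N'" using S1 by (intro power_increasing) auto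
      also have "\<dots> \<le> S ^ N' * real d powr (c * ln S)" using mult_left_mono[OF dpow, of "S ^ N'"] SN by simp
      finally show ?thesis .
    qed
    have ep: "e powr (-p) \<ge> 0" by simp
    have "real (info_compl lam I (e * eps_init lam I d) d) \<le> real ((a + 1) ^ (M - 1)) * C1 * S ^ b * e powr (-p)"
      using ub d e unfolding a_def b_def S_def by blast
    also have "\<dots> \<le> (2 ^ (M - 1) * real d powr real (M - 1)) * C1 * (S ^ N' * real d powr (c * ln S)) * e powr (-p)"
      using A B C1 ep S1 by (intro mult_mono mult_right_mono) auto
    also have "\<dots> = C * e powr (-p) * (real d powr real (M - 1) * real d powr (c * ln S))"
      unfolding C_def by (simp add: mult_ac)
    also have "real d powr real (M - 1) * real d powr (c * ln S) = real d powr q"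
      unfolding q_def by (simp add: powr_add)
    finally show ?thesis .
  qed
  show ?thesis unfolding poly_tractable_def using C0 C1(2) q0 main by blast
qed

lemma SPT_imp:
  assumes "strongly_poly_tractable lam I"
  shows "(\<exists>\<tau>>0. summable (\<lambda>m. lam (Suc m) powr \<tau>)) \<and> lam 1 > lam 2 \<and> (\<lambda>d. real (d - card (I d))) \<in> O(\<lambda>_. 1)"
proof -
  obtain C p where Cp: "C > 0" "p > 0"
    and bnd: "\<forall>d\<ge>1. \<forall>e\<in>{0<..1::real}. real (info_compl lam I (e * eps_init lam I d) d) \<le> C * e powr (-p)"
    using assms unfolding strongly_poly_tractable_def by blast
  have bndq: "\<forall>d\<ge>1. \<forall>e\<in>{0<..1::real}. real (info_compl lam I (e * eps_init lam I d) d) \<le> C * e powr (-p) * real d powr 0"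
    using bnd by simp
  have "poly_tractable lam I" unfolding poly_tractable_def using Cp bndq by (intro exI[of _ C] exI[of _ p] exI[of _ 0]) auto
  then have s: "\<exists>\<tau>>0. summable (\<lambda>m. lam (Suc m) powr \<tau>)" using PT_imp by blast
  have "mu 2 < 1" by (rule lam12_from_bound[OF bnd])
  then have l: "lam 1 > lam 2" using lam1_pos unfolding mu_def by simp
  obtain K1 K2 where K: "K2 \<ge> 0" "(0::real) = 0 \<longrightarrow> K2 = 0" "\<And>d. d \<ge> 1 \<Longrightarrow> real (d - card (I d)) \<le> K1 + K2 * ln (real d)"
    using b_bound[OF Cp(2) _ bndq] by auto
  have "(\<lambda>d. real (d - card (I d))) \<in> O(\<lambda>_. 1)"
  proof (rule landau_o.bigI[where c = "\<bar>K1\<bar> + 1"])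
    show "\<bar>K1\<bar> + 1 > 0" by simp
    show "eventually (\<lambda>d. norm (real (d - card (I d))) \<le> (\<bar>K1\<bar> + 1) * norm (1::real)) at_top"
      using eventually_ge_at_top[of "1::nat"]
    proof eventually_elim
      case (elim d)
      have "K2 = 0" using K(2) by simp
      then show ?case using K(3)[of d] elim by simp
    qed
  qed
  then show ?thesis using s l by blast
qed

lemma SPT_conv:
  assumes s: "\<exists>\<tau>>0. summable (\<lambda>m. lam (Suc m) powr \<tau>)" and l: "lam 1 > lam 2"
    and o: "(\<lambda>d. real (d - card (I d))) \<in> O(\<lambda>_. 1)"
  shows "strongly_poly_tractable lam I"
proof -
  obtain \<tau> where tau: "\<tau> > 0" and summl: "summable (\<lambda>m. lam (Suc m) powr \<tau>)" using s by blast
  have summ: "summable (\<lambda>m. mu (Suc m) powr \<tau>)" using summl summ_iff by blast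
  obtain c where c: "c > 0" and ev: "eventually (\<lambda>d. norm (real (d - card (I d))) \<le> c * norm (1::real)) at_top"
    using landau_o.bigE[OF o] by blast
  then obtain N where N: "\<And>d. d \<ge> N \<Longrightarrow> norm (real (d - card (I d))) \<le> c * norm (1::real)"
    by (auto simp: eventually_at_top_linorder)
  define B where "B = nat \<lceil>c\<rceil> + N"
  have bB: "d - card (I d) \<le> B" for d
  proof (cases "d \<ge> N")
    case True
    then have "real (d - card (I d)) \<le> c" using N by simp
    then have "d - card (I d) \<le> nat \<lceil>c\<rceil>" by linarith
    then show ?thesis unfolding B_def by simp
  next
    case False
    then show ?thesis unfolding B_def by simp
  qed
  have m2: "mu 2 < 1" using l lam1_pos unfolding mu_def by simp
  have rho: "\<And>m. 1 < m \<Longrightarrow> mu m \<le> mu 2" by (intro mu_mono) auto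
  obtain C1 p where C1: "C1 > 0" "p > 0" and ub: "\<forall>d\<ge>1. \<forall>e\<in>{0<..1::real}.
     real (info_compl lam I (e * eps_init lam I d) d)
       \<le> real ((card (I d) + 1) ^ (1 - 1)) * C1 * (\<Sum>m. mu (Suc m) powr \<tau>) ^ (d - card (I d)) * e powr (-p)"
    using upper_main[OF tau summ order_refl mu2_pos m2 rho] by blast
  define S where "S = (\<Sum>m. mu (Suc m) powr \<tau>)"
  have S1: "S \<ge> 1" unfolding S_def by (rule S_ge1[OF summ])
  have main: "real (info_compl lam I (e * eps_init lam I d) d) \<le> (C1 * S ^ B) * e powr (-p)"
    if d: "d \<ge> 1" and e: "e \<in> {0<..1}" for d e
  proof -
    have "real (info_compl lam I (e * eps_init lam I d) d) \<le> C1 * S ^ (d - card (I d)) * e powr (-p)"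
      using ub d e unfolding S_def by simp
    also have "\<dots> \<le> C1 * S ^ B * e powr (-p)"
      using C1 S1 bB[of d] by (intro mult_right_mono mult_left_mono power_increasing) auto
    finally show ?thesis .
  qed
  have "C1 * S ^ B > 0" using C1 S1 by simp
  then show ?thesis unfolding strongly_poly_tractable_def using C1(2) main by blast
qed

end

theorem theorem3:
  fixes lam :: "nat \<Rightarrow> real" and I :: "nat \<Rightarrow> nat set"
  assumes nonneg: "\<And>m. m \<ge> 1 \<Longrightarrow> lam m \<ge> 0"
    and noninc: "\<And>m. m \<ge> 1 \<Longrightarrow> lam (Suc m) \<le> lam m"
    and to_zero: "lam \<longlonglongrightarrow> 0"
    and lam2_pos: "lam 2 > 0"
    and I_sub: "\<And>d. d \<ge> 1 \<Longrightarrow> I d \<subseteq> {1..d}"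
    and I_ne: "\<And>d. d \<ge> 1 \<Longrightarrow> I d \<noteq> {}"
    and I_1: "I 1 = {1}"
    and init_pos: "\<And>d. d \<ge> 1 \<Longrightarrow> eps_init lam I d > 0"
  shows "(strongly_poly_tractable lam I \<longleftrightarrow>
            (\<exists>\<tau>>0. summable (\<lambda>m. lam (Suc m) powr \<tau>)) \<and> lam 1 > lam 2 \<and>
            (\<lambda>d. real (d - card (I d))) \<in> O(\<lambda>_. 1))
       \<and> (poly_tractable lam I \<longleftrightarrow>
            (\<exists>\<tau>>0. summable (\<lambda>m. lam (Suc m) powr \<tau>)) \<and>
            (\<lambda>d. real (d - card (I d))) \<in> O(\<lambda>d. ln (real d)))"
proof -
  interpret setting lam I
    by unfold_locales (use nonneg noninc to_zero lam2_pos I_sub in auto)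
  show ?thesis using SPT_imp SPT_conv PT_imp PT_conv by blast
qed

end
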